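(* Let $L=\{0,1,\dots,m\}^n$ ordered componentwise, with bottom $\bot=(0,\dots,0)$. For each $i\in\{1,\dots,n\}$ let $f_i:L\to L$ be monotone and inflationary. Consider a non-interleaving execution with update-only-on-change starting from $G_0=\bot$, in which at each round $t$ a scheduler selects $S_t\subseteq\{1,\dots,n\}$ and $G_{t+1}$ is any committed state reachable by the concurrent execution of $\{f_i: i\in S_t\}$ from $G_t$. Assume the scheduler is fair: each index $i$ belongs to $S_t$ for infinitely many $t$. Then there exists $T$ with $G_t=G^*$ for all $t\ge T$, and $G^*$ is the least common fixed point of $\{f_1,\dots,f_n\}$.
   Context: Non-interleaving execution with update-only-on-change: execution proceeds in rounds $t=0,1,2,\dots$ with committed states $G_t\in L$. In round $t$ each $f_i$, $i\in S_t$, is executed concurrently on shared memory: process $i$ reads a vector $X\in L$, where each coordinate $X[k]$ is read at some time during the round and returns either $G_t[k]$ or the value of some write to coordinate $k$ performed during the round (reads and writes overlapping arbitrarily; no memory consistency guarantee). Process $i$ computes $H=f_i(X)$ and, for each coordinate $k$, issues a write of $H[k]$ to coordinate $k$ if and only if $H[k]\neq X[k]$. When several writes to the same coordinate occur, the final value is the value of one of them (last writer wins in an arbitrary order). At the end of the round, $G_{t+1}[k]=G_t[k]$ if no write to coordinate $k$ occurred, and otherwise $G_{t+1}[k]$ equals the value of one of the writes to coordinate $k$ during the round. A function $f$ is inflationary if $f(G)\ge G$ for all $G$, monotone if $G\le H\Rightarrow f(G)\le f(H)$. The least common fixed point is the least $G\in L$ with $f_i(G)=G$ for all $i$. *)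

theory Defs
  imports Main
begin

text \<open>States of the lattice L = {0..m}^n are represented as functions nat => nat
  that are bounded by m on coordinates 0..n-1 and equal to 0 on all other
  coordinates.
  Coordinates and process indices are 0..n-1 instead of 1..n.\<close>

definition stL :: "nat \<Rightarrow> nat \<Rightarrow> (nat \<Rightarrow> nat) set" where
  "stL n m = {G. \<forall>k. (k < n \<longrightarrow> G k \<le> m) \<and> (n \<le> k \<longrightarrow> G k = 0)}"

definition monotone_L :: "nat \<Rightarrow> nat \<Rightarrow> ((nat \<Rightarrow> nat) \<Rightarrow> (nat \<Rightarrow> nat)) \<Rightarrow> bool" where
  "monotone_L n m g \<longleftrightarrow> (\<forall>G\<in>stL n m. \<forall>H\<in>stL n m. G \<le> H \<longrightarrow> g G \<le> g H)"

definition inflationary_L :: "nat \<Rightarrow> nat \<Rightarrow> ((nat \<Rightarrow> nat) \<Rightarrow> (nat \<Rightarrow> nat)) \<Rightarrow> bool" where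
  "inflationary_L n m g \<longleftrightarrow> (\<forall>G\<in>stL n m. G \<le> g G)"

text \<open>Process i in S reads vector X i; coordinate k is read at time rd i k.
  It computes f i (X i) and writes coordinate k (at time wr i k) iff the
  computed value differs from the read one. All writes of a process happen
  strictly after all of its reads (it must first compute f i (X i)).
  A read either returns the committed value G k, or the value of a write
  to k that has been performed no later than the read (causality).
  The committed value after the round is unchanged when no write happened,
  otherwise it is the value of one of the writes (arbitrary winner).\<close>

definition round_step ::
  "nat \<Rightarrow> nat \<Rightarrow> (nat \<Rightarrow> (nat \<Rightarrow> nat) \<Rightarrow> (nat \<Rightarrow> nat)) \<Rightarrow> nat set
     \<Rightarrow> (nat \<Rightarrow> nat) \<Rightarrow> (nat \<Rightarrow> nat) \<Rightarrow> bool" where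
  "round_step n m f S G G' \<longleftrightarrow>
    (\<exists>(X :: nat \<Rightarrow> nat \<Rightarrow> nat) (rd :: nat \<Rightarrow> nat \<Rightarrow> nat) (wr :: nat \<Rightarrow> nat \<Rightarrow> nat).
       (\<forall>i\<in>S. X i \<in> stL n m)
     \<and> (\<forall>i\<in>S. \<forall>k<n. \<forall>k'<n. rd i k' < wr i k)
     \<and> (\<forall>i\<in>S. \<forall>k<n. X i k = G k \<or>
           (\<exists>j\<in>S. f j (X j) k \<noteq> X j k \<and> wr j k \<le> rd i k \<and> X i k = f j (X j) k))
     \<and> (\<forall>k<n. (\<forall>j\<in>S. f j (X j) k = X j k) \<longrightarrow> G' k = G k)
     \<and> (\<forall>k<n. (\<exists>j\<in>S. f j (X j) k \<noteq> X j k) \<longrightarrow>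
           (\<exists>j\<in>S. f j (X j) k \<noteq> X j k \<and> G' k = f j (X j) k))
     \<and> (\<forall>k. n \<le> k \<longrightarrow> G' k = G k))"

definition least_common_fp ::
  "nat \<Rightarrow> nat \<Rightarrow> (nat \<Rightarrow> (nat \<Rightarrow> nat) \<Rightarrow> (nat \<Rightarrow> nat)) \<Rightarrow> (nat \<Rightarrow> nat) \<Rightarrow> bool" where
  "least_common_fp n m f Gs \<longleftrightarrow>
     Gs \<in> stL n m \<and> (\<forall>i<n. f i Gs = Gs) \<and>
     (\<forall>H\<in>stL n m. (\<forall>i<n. f i H = H) \<longrightarrow> Gs \<le> H)"

end

theory Submission
  imports Defs
begin

lemma round_lemma:
  assumes f_maps: "\<And>i G. i < n \<Longrightarrow> G \<in> stL n m \<Longrightarrow> f i G \<in> stL n m"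
    and f_mono: "\<And>i. i < n \<Longrightarrow> monotone_L n m (f i)"
    and f_infl: "\<And>i. i < n \<Longrightarrow> inflationary_L n m (f i)"
    and S_sub: "S \<subseteq> {..<n}"
    and rs: "round_step n m f S G G'"
    and GL: "G \<in> stL n m" and HL: "H \<in> stL n m" and GH: "G \<le> H"
    and Hfp: "\<forall>i<n. f i H = H"
  shows "G \<le> G' \<and> G' \<le> H \<and> G' \<in> stL n m \<and> (G' = G \<longrightarrow> (\<forall>i\<in>S. f i G = G))"
proof -
  obtain X :: "nat \<Rightarrow> nat \<Rightarrow> nat" and rd wr :: "nat \<Rightarrow> nat \<Rightarrow> nat" where XL: "\<forall>i\<in>S. X i \<in> stL n m"
    and rw: "\<forall>i\<in>S. \<forall>k<n. \<forall>k'<n. rd i k' < wr i k"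
    and rdv: "\<forall>i\<in>S. \<forall>k<n. X i k = G k \<or>
           (\<exists>j\<in>S. f j (X j) k \<noteq> X j k \<and> wr j k \<le> rd i k \<and> X i k = f j (X j) k)"
    and nw: "\<forall>k<n. (\<forall>j\<in>S. f j (X j) k = X j k) \<longrightarrow> G' k = G k"
    and w: "\<forall>k<n. (\<exists>j\<in>S. f j (X j) k \<noteq> X j k) \<longrightarrow>
           (\<exists>j\<in>S. f j (X j) k \<noteq> X j k \<and> G' k = f j (X j) k)"
    and hi: "\<forall>k. n \<le> k \<longrightarrow> G' k = G k"
    using rs unfolding round_step_def by (elim exE conjE) blast
  have GHk: "G k \<le> H k" for k using GH by (simp add: le_fun_def)
  have fx: "G \<le> f j (X j) \<and> f j (X j) \<le> H"
    if j: "j \<in> S" and b: "\<And>k'. k' < n \<Longrightarrow> G k' \<le> X j k' \<and> X j k' \<le> H k'" for j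
  proof -
    have jn: "j < n" using j S_sub by auto
    have "G \<le> X j" unfolding le_fun_def
    proof
      fix k show "G k \<le> X j k"
        using b[of k] GL by (cases "k < n") (auto simp: stL_def)
    qed
    moreover have "X j \<le> H" unfolding le_fun_def
    proof
      fix k show "X j k \<le> H k"
        using b[of k] XL j by (cases "k < n") (auto simp: stL_def)
    qed
    moreover have "X j \<le> f j (X j)" using f_infl[OF jn] XL j
      by (simp add: inflationary_L_def)
    moreover have "f j (X j) \<le> f j H" using f_mono[OF jn] XL j HL \<open>X j \<le> H\<close>
      by (simp add: monotone_L_def)
    ultimately show ?thesis using Hfp jn by (metis order_trans)
  qed
  have ind: "\<forall>i\<in>S. \<forall>k<n. rd i k < r \<longrightarrow> G k \<le> X i k \<and> X i k \<le> H k" for r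
  proof (induction r)
    case 0 then show ?case by simp
  next
    case (Suc r)
    show ?case
    proof (intro ballI allI impI)
      fix i k assume i: "i \<in> S" and k: "k < n" and r: "rd i k < Suc r"
      from rdv i k have "X i k = G k \<or>
           (\<exists>j\<in>S. f j (X j) k \<noteq> X j k \<and> wr j k \<le> rd i k \<and> X i k = f j (X j) k)" by blast
      then show "G k \<le> X i k \<and> X i k \<le> H k"
      proof
        assume "X i k = G k" then show ?thesis using GHk by simp
      next
        assume "\<exists>j\<in>S. f j (X j) k \<noteq> X j k \<and> wr j k \<le> rd i k \<and> X i k = f j (X j) k"
        then obtain j where j: "j \<in> S" and wj: "wr j k \<le> rd i k" and xe: "X i k = f j (X j) k"
          by blast
        have "\<And>k'. k' < n \<Longrightarrow> G k' \<le> X j k' \<and> X j k' \<le> H k'"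
        proof -
          fix k' assume k': "k' < n"
          have "rd j k' < r" using rw j k k' wj r by fastforce
          then show "G k' \<le> X j k' \<and> X j k' \<le> H k'" using Suc.IH j k' by blast
        qed
        from fx[OF j this] show ?thesis using xe by (simp add: le_fun_def)
      qed
    qed
  qed
  have Xb: "G k \<le> X i k \<and> X i k \<le> H k" if "i \<in> S" "k < n" for i k
    using ind[of "Suc (rd i k)"] that by blast
  have fxb: "G \<le> f j (X j) \<and> f j (X j) \<le> H \<and> X j \<le> f j (X j)" if j: "j \<in> S" for j
  proof -
    have jn: "j < n" using j S_sub by auto
    show ?thesis using fx[OF j Xb[OF j]] f_infl[OF jn] XL j
      by (simp add: inflationary_L_def)
  qed
  have G'k: "G k \<le> G' k \<and> G' k \<le> H k \<and> (G' k = G k \<longrightarrow> (\<forall>j\<in>S. f j (X j) k = X j k))"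
    if k: "k < n" for k
  proof (cases "\<forall>j\<in>S. f j (X j) k = X j k")
    case True then show ?thesis using nw k GHk by simp
  next
    case False
    then obtain j where j: "j \<in> S" "f j (X j) k \<noteq> X j k" "G' k = f j (X j) k"
      using w k by blast
    have "G k \<le> X j k" using Xb j k by blast
    moreover have "X j k \<le> f j (X j) k" "f j (X j) k \<le> H k"
      using fxb[OF j(1)] by (auto simp: le_fun_def)
    ultimately show ?thesis using j by auto
  qed
  have le1: "G \<le> G'" unfolding le_fun_def
  proof
    fix k show "G k \<le> G' k" using G'k[of k] hi by (cases "k < n") auto
  qed
  have le2: "G' \<le> H" unfolding le_fun_def
  proof
    fix k show "G' k \<le> H k" using G'k[of k] hi GHk by (cases "k < n") auto
  qed
  have L: "G' \<in> stL n m" unfolding stL_def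
  proof (intro CollectI allI conjI impI)
    fix k
    show "k < n \<Longrightarrow> G' k \<le> m"
    proof -
      assume "k < n"
      have "G' k \<le> H k" using le2 by (simp add: le_fun_def)
      moreover have "H k \<le> m" using HL \<open>k < n\<close> by (simp add: stL_def)
      ultimately show ?thesis by linarith
    qed
    show "n \<le> k \<Longrightarrow> G' k = 0" using hi GL by (simp add: stL_def)
  qed
  have st: "\<forall>i\<in>S. f i G = G" if eq: "G' = G"
  proof
    fix i assume i: "i \<in> S"
    have iN: "i < n" using i S_sub by auto
    have nowr: "\<forall>j\<in>S. \<forall>k<n. f j (X j) k = X j k" using G'k eq by blast
    have XG: "X i = G"
    proof
      fix k show "X i k = G k"
      proof (cases "k < n")
        case True then show ?thesis using rdv nowr i by blast
      next
        case False then show ?thesis using XL i GL by (auto simp: stL_def)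
      qed
    qed
    show "f i G = G"
    proof
      fix k show "f i G k = G k"
      proof (cases "k < n")
        case True then show ?thesis using nowr i XG by metis
      next
        case False then show ?thesis using f_maps[OF iN GL] GL by (auto simp: stL_def)
      qed
    qed
  qed
  show ?thesis using le1 le2 L st by blast
qed

theorem theorem3:
  fixes n m :: nat
    and f :: "nat \<Rightarrow> (nat \<Rightarrow> nat) \<Rightarrow> (nat \<Rightarrow> nat)"
    and S :: "nat \<Rightarrow> nat set"
    and G :: "nat \<Rightarrow> (nat \<Rightarrow> nat)"
  assumes f_maps: "\<And>i G. i < n \<Longrightarrow> G \<in> stL n m \<Longrightarrow> f i G \<in> stL n m"
    and f_mono: "\<And>i. i < n \<Longrightarrow> monotone_L n m (f i)"
    and f_infl: "\<And>i. i < n \<Longrightarrow> inflationary_L n m (f i)"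
    and G0: "G 0 = (\<lambda>k. 0)"
    and S_sub: "\<And>t. S t \<subseteq> {..<n}"
    and step: "\<And>t. round_step n m f (S t) (G t) (G (Suc t))"
    and fair: "\<And>i. i < n \<Longrightarrow> infinite {t. i \<in> S t}"
  shows "\<exists>T Gs. (\<forall>t\<ge>T. G t = Gs) \<and> least_common_fp n m f Gs"
proof -
  define Top :: "nat \<Rightarrow> nat" where "Top = (\<lambda>k. if k < n then m else 0)"
  have TopL: "Top \<in> stL n m" by (simp add: Top_def stL_def)
  have Topfp: "\<forall>i<n. f i Top = Top"
  proof (intro allI impI)
    fix i assume i: "i < n"
    have a1: "Top \<le> f i Top" using f_infl[OF i] TopL by (simp add: inflationary_L_def)
    have a2: "f i Top \<in> stL n m" using f_maps[OF i TopL] .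
    show "f i Top = Top"
    proof
      fix k
      note a = a1 a2
      have "Top k \<le> f i Top k" using a(1) by (simp add: le_fun_def)
      moreover have "f i Top k \<le> Top k" using a(2) by (cases "k < n") (auto simp: stL_def Top_def)
      ultimately show "f i Top k = Top k" by linarith
    qed
  qed
  have bound: "G t \<in> stL n m \<and> G t \<le> H"
    if HL: "H \<in> stL n m" and Hfp: "\<forall>i<n. f i H = H" for H t
  proof (induction t)
    case 0 then show ?case using G0 by (simp add: stL_def le_fun_def)
  next
    case (Suc t)
    then show ?case using round_lemma[OF f_maps f_mono f_infl S_sub step _ HL _ Hfp, of t]
      by blast
  qed
  have GL: "G t \<in> stL n m" for t using bound[OF TopL Topfp] by blast
  have rl: "G t \<le> G (Suc t) \<and> (G (Suc t) = G t \<longrightarrow> (\<forall>i\<in>S t. f i (G t) = G t))" for t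
    using round_lemma[OF f_maps f_mono f_infl S_sub step GL TopL _ Topfp, of t]
      bound[OF TopL Topfp, of t] by blast
  have mono: "G t \<le> G t'" if "t \<le> t'" for t t'
    using lift_Suc_mono_le[of G, OF _ that] rl by blast
  define s where "s t = (\<Sum>k<n. G t k)" for t
  have sb: "s t \<le> n * m" for t
  proof -
    have "s t \<le> (\<Sum>k<n. m)" unfolding s_def
      by (rule sum_mono) (use GL in \<open>auto simp: stL_def\<close>)
    then show ?thesis by simp
  qed
  have "range s \<subseteq> {..n*m}" using sb by auto
  then have fin: "finite (range s)" by (rule finite_subset) simp
  obtain T where T: "s T = Max (range s)"
    using Max_in[OF fin] by auto
  have stab: "G t = G T" if tT: "t \<ge> T" for t
  proof
    fix k
    have le: "\<And>k. G T k \<le> G t k" using mono[OF tT] by (simp add: le_fun_def)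
    have "s t \<le> s T" using T fin by simp
    moreover have "s T \<le> s t" unfolding s_def by (rule sum_mono) (use le in auto)
    ultimately have "s t = s T" by simp
    show "G t k = G T k"
    proof (cases "k < n")
      case True
      have "(\<Sum>k<n. G T k) = (\<Sum>k<n. G t k)" using \<open>s t = s T\<close> by (simp add: s_def)
      from sum_mono_inv[OF this] le True show ?thesis by fastforce
    next
      case False then show ?thesis using GL[of t] GL[of T] by (auto simp: stL_def)
    qed
  qed
  have fp: "\<forall>i<n. f i (G T) = G T"
  proof (intro allI impI)
    fix i assume i: "i < n"
    have "\<not> (\<exists>m. \<forall>t\<in>{t. i \<in> S t}. t \<le> m)"
      using fair[OF i] finite_nat_set_iff_bounded_le by blast
    then obtain t where t0: "i \<in> S t" "\<not> t \<le> T" by auto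
    then have t: "t \<ge> T" "i \<in> S t" by auto
    have e1: "G (Suc t) = G T" using stab[of "Suc t"] t(1) by linarith
    have e2: "G t = G T" using stab[of t] t(1) by linarith
    have "G (Suc t) = G t" using e1 e2 by (rule trans[OF _ sym])
    then have "f i (G t) = G t" using rl[of t] t(2) by blast
    then show "f i (G T) = G T" using e2 by simp
  qed
  have least: "\<forall>H\<in>stL n m. (\<forall>i<n. f i H = H) \<longrightarrow> G T \<le> H"
    using bound by blast
  have "least_common_fp n m f (G T)" unfolding least_common_fp_def using GL[of T] fp least by blast
  moreover have "\<forall>t\<ge>T. G t = G T" using stab by blast
  ultimately show ?thesis by blast
qed

end
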